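(* TC-Approval is monotonic, while UC-Approval and CO-Approval are not monotonic.
   Context: A tournament $T=(V(T),\succ)$ is a finite set of candidates with an asymmetric and complete binary relation $\succ$; $N^+_T(c)=\{b:c\succ b\}$ and $T[B]$ is the induced subtournament. Tournament solutions: the top cycle $TC(T)$ is the unique minimal nonempty $X\subseteq V(T)$ with $x\succ y$ for all $x\in X$, $y\notin X$; the Copeland set $CO(T)$ is the set of candidates of maximum outdegree; the uncovered set $UC(T)$ is the set of kings, where $a$ is a king if for every $b\neq a$, either $a\succ b$ or there is $c$ with $a\succ c\succ b$. An election $\mathcal{E}=(\mathcal{C},\mathcal{T})$ has a finite candidate set and a finite list of votes, each a tournament on $\mathcal{C}$. For a tournament solution $f$, $f$-Approval gives candidate $c$ score $|\{T\in\mathcal{T}: c\in f(T)\}|$ (with multiplicity); winners are those of highest score. A voting correspondence $\varphi$ is monotonic if for every two elections $\mathcal{E}=(\mathcal{C},(T_1,\dots,T_n))$, $\mathcal{E}'=(\mathcal{C},(T'_1,\dots,T'_n))$ and every $c\in\varphi(\mathcal{E})$ such that for every $i$, $T_i[\mathcal{C}\setminus\{c\}]=T'_i[\mathcal{C}\setminus\{c\}]$ and $N^+_{T_i}(c)\subseteq N^+_{T'_i}(c)$, it holds that $c\in\varphi(\mathcal{E}')$. *)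

theory Defs
  imports Main
begin

definition tournament :: "'a set \<Rightarrow> 'a rel \<Rightarrow> bool" where
  "tournament V R \<longleftrightarrow> finite V \<and> R \<subseteq> V \<times> V
     \<and> (\<forall>x y. (x, y) \<in> R \<longrightarrow> (y, x) \<notin> R)
     \<and> (\<forall>x\<in>V. \<forall>y\<in>V. x \<noteq> y \<longrightarrow> (x, y) \<in> R \<or> (y, x) \<in> R)"

definition out_nbhd :: "'a rel \<Rightarrow> 'a \<Rightarrow> 'a set" where
  "out_nbhd R c = {b. (c, b) \<in> R}"

definition induced :: "'a rel \<Rightarrow> 'a set \<Rightarrow> 'a rel" where
  "induced R B = R \<inter> (B \<times> B)"

definition dominant :: "'a set \<Rightarrow> 'a rel \<Rightarrow> 'a set \<Rightarrow> bool" where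
  "dominant V R X \<longleftrightarrow> X \<subseteq> V \<and> X \<noteq> {} \<and> (\<forall>x\<in>X. \<forall>y\<in>V - X. (x, y) \<in> R)"

definition top_cycle :: "'a set \<Rightarrow> 'a rel \<Rightarrow> 'a set" where
  "top_cycle V R = (THE X. dominant V R X \<and> (\<forall>Y. dominant V R Y \<longrightarrow> \<not> Y \<subset> X))"

definition copeland :: "'a set \<Rightarrow> 'a rel \<Rightarrow> 'a set" where
  "copeland V R = {c \<in> V. \<forall>d \<in> V. card (out_nbhd R d) \<le> card (out_nbhd R c)}"

definition uncovered :: "'a set \<Rightarrow> 'a rel \<Rightarrow> 'a set" where
  "uncovered V R = {a \<in> V. \<forall>b \<in> V. b \<noteq> a \<longrightarrow>
      (a, b) \<in> R \<or> (\<exists>c \<in> V. (a, c) \<in> R \<and> (c, b) \<in> R)}"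

definition election :: "'a set \<Rightarrow> 'a rel list \<Rightarrow> bool" where
  "election C Ts \<longleftrightarrow> finite C \<and> C \<noteq> {} \<and> (\<forall>T \<in> set Ts. tournament C T)"

definition approval_score :: "('a set \<Rightarrow> 'a rel \<Rightarrow> 'a set) \<Rightarrow> 'a set \<Rightarrow> 'a rel list \<Rightarrow> 'a \<Rightarrow> nat" where
  "approval_score f C Ts c = length (filter (\<lambda>T. c \<in> f C T) Ts)"

definition approval :: "('a set \<Rightarrow> 'a rel \<Rightarrow> 'a set) \<Rightarrow> 'a set \<Rightarrow> 'a rel list \<Rightarrow> 'a set" where
  "approval f C Ts = {c \<in> C. \<forall>d \<in> C. approval_score f C Ts d \<le> approval_score f C Ts c}"

definition monotonic :: "('a set \<Rightarrow> 'a rel list \<Rightarrow> 'a set) \<Rightarrow> bool" where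
  "monotonic \<phi> \<longleftrightarrow> (\<forall>C Ts Ts' c.
      election C Ts \<and> election C Ts' \<and> length Ts = length Ts' \<and> c \<in> \<phi> C Ts \<and>
      (\<forall>i < length Ts. induced (Ts ! i) (C - {c}) = induced (Ts' ! i) (C - {c})
                      \<and> out_nbhd (Ts ! i) c \<subseteq> out_nbhd (Ts' ! i) c)
      \<longrightarrow> c \<in> \<phi> C Ts')"

end

theory Submission
  imports Defs
begin


lemma tour_asym: "tournament V R \<Longrightarrow> (x, y) \<in> R \<Longrightarrow> (y, x) \<notin> R"
  unfolding tournament_def by blast
lemma tour_sub: "tournament V R \<Longrightarrow> (x, y) \<in> R \<Longrightarrow> x \<in> V \<and> y \<in> V"
  unfolding tournament_def by blast
lemma tour_comp: "tournament V R \<Longrightarrow> x \<in> V \<Longrightarrow> y \<in> V \<Longrightarrow> x \<noteq> y \<Longrightarrow> (x, y) \<in> R \<or> (y, x) \<in> R"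
  unfolding tournament_def by blast

lemma dom_chain:
  assumes "tournament V R" "dominant V R X" "dominant V R Y"
  shows "X \<subseteq> Y \<or> Y \<subseteq> X"
proof (rule ccontr)
  assume "\<not> (X \<subseteq> Y \<or> Y \<subseteq> X)"
  then obtain x y where "x \<in> X" "x \<notin> Y" "y \<in> Y" "y \<notin> X" by blast
  with assms have "(x,y) \<in> R" "(y,x) \<in> R" unfolding dominant_def by blast+
  with tour_asym[OF assms(1)] show False by blast
qed

lemma tc_exists:
  assumes "tournament V R" "V \<noteq> {}"
  shows "\<exists>X. dominant V R X \<and> (\<forall>Y. dominant V R Y \<longrightarrow> X \<subseteq> Y)"
proof -
  have fin: "finite V" using assms(1) by (simp add: tournament_def)
  have "dominant V R V" using assms(2) by (simp add: dominant_def)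
  then have "\<exists>n. \<exists>X. dominant V R X \<and> card X = n" by blast
  then obtain X where X: "dominant V R X" and minc: "\<forall>Y. dominant V R Y \<longrightarrow> card X \<le> card Y"
  proof -
    assume r: "\<And>X. dominant V R X \<Longrightarrow> \<forall>Y. dominant V R Y \<longrightarrow> card X \<le> card Y \<Longrightarrow> thesis"
    let ?n = "LEAST n. \<exists>X. dominant V R X \<and> card X = n"
    from \<open>\<exists>n. \<exists>X. dominant V R X \<and> card X = n\<close> have "\<exists>X. dominant V R X \<and> card X = ?n"
      by (rule LeastI_ex)
    then obtain X where "dominant V R X" "card X = ?n" by blast
    moreover have "\<forall>Y. dominant V R Y \<longrightarrow> ?n \<le> card Y"
      by (auto intro: Least_le)
    ultimately show thesis using r by auto
  qed
  have "\<forall>Y. dominant V R Y \<longrightarrow> X \<subseteq> Y"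
  proof (intro allI impI)
    fix Y assume Y: "dominant V R Y"
    show "X \<subseteq> Y"
    proof (rule ccontr)
      assume "\<not> X \<subseteq> Y"
      with dom_chain[OF assms(1) X Y] have "Y \<subset> X" by blast
      moreover have "finite X" using X fin by (auto simp: dominant_def intro: finite_subset)
      ultimately have "card Y < card X" by (rule psubset_card_mono[rotated])
      with minc Y show False by force
    qed
  qed
  with X show ?thesis by blast
qed

lemma tc_props:
  assumes "tournament V R" "V \<noteq> {}"
  shows "dominant V R (top_cycle V R)" "\<And>Y. dominant V R Y \<Longrightarrow> top_cycle V R \<subseteq> Y"
proof -
  obtain X where X: "dominant V R X" "\<forall>Y. dominant V R Y \<longrightarrow> X \<subseteq> Y"
    using tc_exists[OF assms] by blast
  have "top_cycle V R = X"
    unfolding top_cycle_def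
  proof (rule the_equality)
    show "dominant V R X \<and> (\<forall>Y. dominant V R Y \<longrightarrow> \<not> Y \<subset> X)" using X by blast
    fix Z assume "dominant V R Z \<and> (\<forall>Y. dominant V R Y \<longrightarrow> \<not> Y \<subset> Z)"
    with X show "Z = X" by blast
  qed
  with X show "dominant V R (top_cycle V R)" "\<And>Y. dominant V R Y \<Longrightarrow> top_cycle V R \<subseteq> Y"
    by auto
qed

lemma vote_step:
  assumes T: "tournament C T" and T': "tournament C T'" and ne: "C \<noteq> {}"
    and ind: "induced T (C - {c}) = induced T' (C - {c})"
    and out: "out_nbhd T c \<subseteq> out_nbhd T' c"
  shows "of_bool (d \<in> top_cycle C T') + of_bool (c \<in> top_cycle C T)
       \<le> of_bool (d \<in> top_cycle C T) + (of_bool (c \<in> top_cycle C T') :: nat)"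
proof -
  define X where "X = top_cycle C T"
  define Y where "Y = top_cycle C T'"
  have X: "dominant C T X" "\<And>Z. dominant C T Z \<Longrightarrow> X \<subseteq> Z"
    using tc_props[OF T ne] by (auto simp: X_def)
  have Y: "dominant C T' Y" "\<And>Z. dominant C T' Z \<Longrightarrow> Y \<subseteq> Z"
    using tc_props[OF T' ne] by (auto simp: Y_def)
  have tr: "(x, y) \<in> T \<longleftrightarrow> (x, y) \<in> T'" if "x \<in> C - {c}" "y \<in> C - {c}" for x y
    using ind that unfolding induced_def by blast
  have cT: "(c, y) \<in> T'" if "(c, y) \<in> T" for y
    using out that unfolding out_nbhd_def by blast
  have Tc: "(y, c) \<in> T" if "(y, c) \<in> T'" "y \<in> C" for y
  proof -
    have "y \<noteq> c" using that tour_asym[OF T'] by blast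
    have "(c, y) \<notin> T'" using that tour_asym[OF T'] by blast
    hence "(c, y) \<notin> T" using cT by blast
    moreover have "c \<in> C" using that tour_sub[OF T'] by blast
    ultimately show ?thesis using tour_comp[OF T \<open>y \<in> C\<close> \<open>c \<in> C\<close> \<open>y \<noteq> c\<close>] by blast
  qed
  have YdomT: "dominant C T Y" if cY: "c \<notin> Y"
    unfolding dominant_def
  proof (intro conjI ballI)
    show "Y \<subseteq> C" "Y \<noteq> {}" using Y(1) unfolding dominant_def by auto
    fix x y assume x: "x \<in> Y" and y: "y \<in> C - Y"
    have xy: "(x, y) \<in> T'" using Y(1) x y unfolding dominant_def by blast
    have xC: "x \<in> C - {c}" using x cY Y(1) unfolding dominant_def by blast
    show "(x, y) \<in> T"
    proof (cases "y = c")
      case True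
      then show ?thesis using Tc xy xC by blast
    next
      case False
      then show ?thesis using tr[OF xC] xy y by blast
    qed
  qed
  show ?thesis
  proof (cases "c \<in> X")
    case True
    have "dominant C T' X"
      unfolding dominant_def
    proof (intro conjI ballI)
      show "X \<subseteq> C" "X \<noteq> {}" using X(1) unfolding dominant_def by auto
      fix x y assume x: "x \<in> X" and y: "y \<in> C - X"
      have xy: "(x, y) \<in> T" using X(1) x y unfolding dominant_def by blast
      have yC: "y \<in> C - {c}" using y True by blast
      show "(x, y) \<in> T'"
      proof (cases "x = c")
        case True
        then show ?thesis using cT xy by blast
      next
        case False
        then show ?thesis using tr[OF _ yC] xy x X(1) unfolding dominant_def by blast
      qed
    qed
    hence YX: "Y \<subseteq> X" by (rule Y(2))
    have "c \<in> Y"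
    proof (rule ccontr)
      assume "c \<notin> Y"
      hence "X \<subseteq> Y" using YdomT X(2) by blast
      with True \<open>c \<notin> Y\<close> show False by blast
    qed
    then show ?thesis using True YX by (auto simp: X_def[symmetric] Y_def[symmetric])
  next
    case False
    show ?thesis
    proof (cases "c \<in> Y")
      case True
      then show ?thesis using False by (auto simp: X_def[symmetric] Y_def[symmetric])
    next
      case cY: False
      have XY: "X \<subseteq> Y" using YdomT[OF cY] X(2) by blast
      have "dominant C T' X"
        unfolding dominant_def
      proof (intro conjI ballI)
        show "X \<subseteq> C" "X \<noteq> {}" using X(1) unfolding dominant_def by auto
        fix x y assume x: "x \<in> X" and y: "y \<in> C - X"
        show "(x, y) \<in> T'"
        proof (cases "y = c")
          case True
          have "x \<in> Y" using XY x by blast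
          moreover have "c \<in> C" using y True by blast
          ultimately show ?thesis using Y(1) cY True unfolding dominant_def by blast
        next
          case False
          have "(x, y) \<in> T" using X(1) x y unfolding dominant_def by blast
          moreover have "x \<in> C - {c}" using x False X(1) unfolding dominant_def
            using \<open>c \<notin> X\<close> by blast
          ultimately show ?thesis using tr False y by blast
        qed
      qed
      hence "Y \<subseteq> X" by (rule Y(2))
      with XY have "X = Y" by blast
      then show ?thesis by (simp add: X_def Y_def)
    qed
  qed
qed

lemma score_sum:
  assumes "length Ts = length Ts'"
    "\<forall>i<length Ts. of_bool (d \<in> f C (Ts'!i)) + of_bool (c \<in> f C (Ts!i))
        \<le> of_bool (d \<in> f C (Ts!i)) + (of_bool (c \<in> f C (Ts'!i)) :: nat)"
  shows "approval_score f C Ts' d + approval_score f C Ts c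
       \<le> approval_score f C Ts d + approval_score f C Ts' c"
  using assms
proof (induction Ts arbitrary: Ts')
  case Nil
  then show ?case by (simp add: approval_score_def)
next
  case (Cons T Ts)
  then obtain T' Ts'' where Ts': "Ts' = T' # Ts''" by (cases Ts') auto
  have IH: "approval_score f C Ts'' d + approval_score f C Ts c
       \<le> approval_score f C Ts d + approval_score f C Ts'' c"
    using Cons.IH[of Ts''] Cons.prems Ts' by fastforce
  have h: "of_bool (d \<in> f C T') + of_bool (c \<in> f C T)
        \<le> of_bool (d \<in> f C T) + (of_bool (c \<in> f C T') :: nat)"
    using Cons.prems(2) Ts' by (metis length_Cons nth_Cons_0 zero_less_Suc)
  show ?case using IH h unfolding Ts' approval_score_def
    by (auto split: if_splits)
qed

lemma tc_mono: "monotonic (approval (top_cycle :: 'a set \<Rightarrow> 'a rel \<Rightarrow> 'a set))"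
  unfolding monotonic_def
proof (intro allI impI, elim conjE)
  fix C :: "'a set" and Ts Ts' c
  assume E: "election C Ts" and E': "election C Ts'" and len: "length Ts = length Ts'"
    and cw: "c \<in> approval top_cycle C Ts"
    and cond: "\<forall>i<length Ts. induced (Ts ! i) (C - {c}) = induced (Ts' ! i) (C - {c})
                      \<and> out_nbhd (Ts ! i) c \<subseteq> out_nbhd (Ts' ! i) c"
  have ne: "C \<noteq> {}" using E by (simp add: election_def)
  have cC: "c \<in> C" using cw by (simp add: approval_def)
  show "c \<in> approval top_cycle C Ts'"
    unfolding approval_def
  proof (intro CollectI conjI ballI cC)
    fix d assume dC: "d \<in> C"
    have "approval_score top_cycle C Ts' d + approval_score top_cycle C Ts c
       \<le> approval_score top_cycle C Ts d + approval_score top_cycle C Ts' c"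
    proof (rule score_sum[OF len], intro allI impI)
      fix i assume i: "i < length Ts"
      have T: "tournament C (Ts!i)" using E i by (simp add: election_def)
      have T': "tournament C (Ts'!i)" using E' i len by (simp add: election_def)
      show "of_bool (d \<in> top_cycle C (Ts'!i)) + of_bool (c \<in> top_cycle C (Ts!i))
        \<le> of_bool (d \<in> top_cycle C (Ts!i)) + (of_bool (c \<in> top_cycle C (Ts'!i)) :: nat)"
        using vote_step[OF T T' ne] cond i by blast
    qed
    moreover have "approval_score top_cycle C Ts d \<le> approval_score top_cycle C Ts c"
      using cw dC by (simp add: approval_def)
    ultimately show "approval_score top_cycle C Ts' d \<le> approval_score top_cycle C Ts' c"
      by linarith
  qed
qed



lemma out_nbhd_empty[simp]: "out_nbhd {} c = {}" by (simp add: out_nbhd_def)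
lemma out_nbhd_insert[simp]: "out_nbhd (insert (a,b) R) c = (if a = c then insert b (out_nbhd R c) else out_nbhd R c)"
  by (auto simp: out_nbhd_def)

lemma nonmono_witness:
  assumes "election C Ts" "election C Ts'" "length Ts = length Ts'" "c \<in> \<phi> C Ts"
    "\<forall>i < length Ts. induced (Ts ! i) (C - {c}) = induced (Ts' ! i) (C - {c})
                      \<and> out_nbhd (Ts ! i) c \<subseteq> out_nbhd (Ts' ! i) c"
    "c \<notin> \<phi> C Ts'"
  shows "\<not> monotonic \<phi>"
  using assms unfolding monotonic_def by blast

lemma co_counter: "\<not> monotonic (approval (copeland :: nat set \<Rightarrow> nat rel \<Rightarrow> nat set))"
proof (rule nonmono_witness[where C="{0,1,2,3}" and c=0
   and Ts="[{(0,2),(0,3),(1,0),(2,1),(3,1),(3,2)}, {(1,0),(2,0),(2,1),(2,3),(3,0),(3,1)}]"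
   and Ts'="[{(0,2),(0,3),(1,0),(2,1),(3,1),(3,2)}, {(0,2),(1,0),(2,1),(2,3),(3,0),(3,1)}]"])
  show "election {0, 1, 2, 3::nat} [{(0,2),(0,3),(1,0),(2,1),(3,1),(3,2)}, {(1,0),(2,0),(2,1),(2,3),(3,0),(3,1)}]"
    by (simp add: election_def tournament_def)
  show "election {0, 1, 2, 3::nat} [{(0,2),(0,3),(1,0),(2,1),(3,1),(3,2)}, {(0,2),(1,0),(2,1),(2,3),(3,0),(3,1)}]"
    by (simp add: election_def tournament_def)
qed (auto simp: approval_def approval_score_def copeland_def induced_def less_Suc_eq numeral_2_eq_2)

lemma uc_counter: "\<not> monotonic (approval (uncovered :: nat set \<Rightarrow> nat rel \<Rightarrow> nat set))"
proof (rule nonmono_witness[where C="{0,1,2,3,4}" and c=0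
   and Ts="[{(1, 0), (2, 0), (2, 1), (2, 3), (2, 4), (3, 0), (3, 1), (4, 0), (4, 1), (4, 3)},
            {(1, 0), (1, 4), (2, 0), (2, 1), (3, 0), (3, 1), (3, 2), (4, 0), (4, 2), (4, 3)},
            {(0, 1), (0, 2), (0, 3), (0, 4), (2, 1), (3, 1), (3, 2), (4, 1), (4, 2), (4, 3)}]"
   and Ts'="[{(1, 0), (2, 0), (2, 1), (2, 3), (2, 4), (3, 0), (3, 1), (4, 0), (4, 1), (4, 3)},
            {(0, 3), (1, 0), (1, 4), (2, 0), (2, 1), (3, 1), (3, 2), (4, 0), (4, 2), (4, 3)},
            {(0, 1), (0, 2), (0, 3), (0, 4), (2, 1), (3, 1), (3, 2), (4, 1), (4, 2), (4, 3)}]"])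
qed (auto simp: election_def tournament_def approval_def approval_score_def uncovered_def induced_def less_Suc_eq numeral_3_eq_3)


theorem theorem3:
  shows "monotonic (approval (top_cycle :: 'a set \<Rightarrow> 'a rel \<Rightarrow> 'a set))
    \<and> \<not> monotonic (approval (uncovered :: nat set \<Rightarrow> nat rel \<Rightarrow> nat set))
    \<and> \<not> monotonic (approval (copeland :: nat set \<Rightarrow> nat rel \<Rightarrow> nat set))"
  using tc_mono uc_counter co_counter by blast

end
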